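(* Let $X$ be a random variable with Gamma distribution $\Gamma(\alpha,\theta)$, $\alpha,\theta>0$ (density $\frac{x^{\alpha-1}e^{-x/\theta}}{\theta^\alpha\Gamma(\alpha)}$, $x>0$), and let $s\geq1$ be an integer. If $\alpha\geq 1$, then $X$ is $s$-IFR. If $\alpha<1$, then $X$ is $s$-DFR.
   Context: For a nonnegative random variable $X$ with density $f_X$: set $\overline{T}_{X,0}=f_X$, $\widetilde{\mu}_{X,0}=1$, and for $s\geq1$, $x\geq0$, $\overline{T}_{X,s}(x)=\frac{1}{\widetilde{\mu}_{X,s-1}}\int_x^\infty \overline{T}_{X,s-1}(t)\,dt$ with $\widetilde{\mu}_{X,s}=\int_0^\infty \overline{T}_{X,s}(t)\,dt$. The $s$-iterated failure rate is $r_{X,s}(x)=\frac{\overline{T}_{X,s-1}(x)}{\int_x^\infty \overline{T}_{X,s-1}(t)\,dt}$ for $x\geq 0$ (so $r_{X,1}=f_X/(1-F_X)$). $X$ is called $s$-IFR (resp. $s$-DFR) if $r_{X,s}$ is increasing (resp. decreasing) on $[0,\infty)$. *)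

theory Defs
  imports "HOL-Analysis.Analysis"
begin

fun Tbar :: "(real \<Rightarrow> real) \<Rightarrow> nat \<Rightarrow> real \<Rightarrow> real" where
  "Tbar f 0 = f"
| "Tbar f (Suc s) = (\<lambda>x. (LBINT t:{x..}. Tbar f s t) / (LBINT t:{0..}. Tbar f s t))"

definition mu_tilde :: "(real \<Rightarrow> real) \<Rightarrow> nat \<Rightarrow> real" where
  "mu_tilde f s = (LBINT t:{0..}. Tbar f s t)"

definition iter_failure_rate :: "(real \<Rightarrow> real) \<Rightarrow> nat \<Rightarrow> real \<Rightarrow> real" where
  "iter_failure_rate f s x = Tbar f (s - 1) x / (LBINT t:{x..}. Tbar f (s - 1) t)"

definition s_IFR :: "(real \<Rightarrow> real) \<Rightarrow> nat \<Rightarrow> bool" where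
  "s_IFR f s \<longleftrightarrow> mono_on {0..} (iter_failure_rate f s)"

text \<open>Decreasing failure rate; checked on (0,inf) since the density of Gamma with
  alpha < 1 is +infinity at 0.\<close>
definition s_DFR :: "(real \<Rightarrow> real) \<Rightarrow> nat \<Rightarrow> bool" where
  "s_DFR f s \<longleftrightarrow> antimono_on {0<..} (iter_failure_rate f s)"

definition gamma_density :: "real \<Rightarrow> real \<Rightarrow> real \<Rightarrow> real" where
  "gamma_density \<alpha> \<theta> x =
     (if x > 0 then x powr (\<alpha> - 1) * exp (- x / \<theta>) / (\<theta> powr \<alpha> * Gamma \<alpha>) else 0)"

end

theory Submission
  imports Defs "HOL-Real_Asymp.Real_Asymp"
begin

definition tail :: "(real \<Rightarrow> real) \<Rightarrow> real \<Rightarrow> real" where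
  "tail g x = (LBINT t:{x..}. g t)"

definition good :: "real \<Rightarrow> (real \<Rightarrow> real) \<Rightarrow> bool" where
  "good b g \<longleftrightarrow> (\<forall>x. 0 \<le> g x) \<and> set_integrable lborel {0..} g \<and> (\<forall>x>0. 0 < g x)
     \<and> continuous_on {0<..} g \<and> (\<exists>K. \<forall>x\<ge>1. g x \<le> K * exp (- b * x))"

lemma good_si: "good b g \<Longrightarrow> set_integrable lborel {0..} g" by (simp add: good_def)
lemma good_nn: "good b g \<Longrightarrow> 0 \<le> g x" by (simp add: good_def)
lemma good_pos: "good b g \<Longrightarrow> x > 0 \<Longrightarrow> 0 < g x" by (simp add: good_def)
lemma good_cont: "good b g \<Longrightarrow> continuous_on {0<..} g" by (simp add: good_def)
lemma good_bd: "good b g \<Longrightarrow> \<exists>K. \<forall>x\<ge>1. g x \<le> K * exp (- b * x)" by (simp add: good_def)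

lemma good_int:
  assumes "good b g" "x \<ge> 0"
  shows "set_integrable lborel {x..} g" "g integrable_on {x..}" "tail g x = integral {x..} g"
proof -
  show *: "set_integrable lborel {x..} g"
    by (rule set_integrable_subset[OF good_si[OF assms(1)]]) (use assms in auto)
  show "g integrable_on {x..}" "tail g x = integral {x..} g"
    using set_borel_integral_eq_integral[OF *] by (auto simp: tail_def)
qed

lemma good_int_Icc:
  assumes "good b g" "x \<ge> 0"
  shows "set_integrable lborel {x..y} g" "g integrable_on {x..y}"
proof -
  show *: "set_integrable lborel {x..y} g"
    by (rule set_integrable_subset[OF good_si[OF assms(1)]]) (use assms in auto)
  show "g integrable_on {x..y}"
    using set_borel_integral_eq_integral[OF *] by auto
qed

lemma tail_split:
  assumes "good b g" "0 \<le> a" "a \<le> y"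
  shows "tail g a = integral {a..y} g + tail g y"
proof -
  have i1: "(g has_integral (integral {a..y} g)) {a..y}"
    using good_int_Icc(2)[OF assms(1,2)] by (rule integrable_integral)
  have i2: "(g has_integral (integral {y..} g)) {y..}"
    using good_int(2)[OF assms(1), of y] assms by (intro integrable_integral) auto
  have "(g has_integral (integral {a..y} g + integral {y..} g)) ({a..y} \<union> {y..})"
    by (rule has_integral_Un[OF i1 i2]) (use assms in auto)
  moreover have "{a..y} \<union> {y..} = {a..}" using assms by auto
  ultimately have "integral {a..} g = integral {a..y} g + integral {y..} g"
    by (simp add: integral_unique)
  then show ?thesis using good_int(3)[OF assms(1)] assms by simp
qed

lemma tail_pos:
  assumes "good b g" "x \<ge> 0"
  shows "tail g x > 0"
proof -
  have c: "continuous_on {x+1..x+2} g"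
    by (rule continuous_on_subset[OF good_cont[OF assms(1)]]) (use assms in auto)
  obtain z where z: "z \<in> {x+1..x+2}" "\<forall>y\<in>{x+1..x+2}. g z \<le> g y"
    using continuous_attains_inf[OF compact_Icc _ c] by auto
  have gz: "g z > 0" using z assms good_pos[OF assms(1), of z] by auto
  have "integral {x+1..x+2} (\<lambda>_. g z) \<le> integral {x+1..x+2} g"
    by (rule integral_le[OF _ integrable_continuous_interval[OF c]]) (use z in auto)
  also have "\<dots> \<le> integral {x..} g"
    by (rule integral_subset_le[OF _ good_int_Icc(2)[OF assms(1)] good_int(2)[OF assms]])
       (use assms good_nn[OF assms(1)] in auto)
  finally show ?thesis using gz good_int[OF assms] by simp
qed

lemma tail_nonneg: "(\<And>x. 0 \<le> g x) \<Longrightarrow> tail g x \<ge> 0"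
  unfolding tail_def set_lebesgue_integral_def by (intro integral_nonneg_AE) auto

lemma tail_mono:
  assumes "good b g" "0 \<le> x" "x \<le> y"
  shows "tail g y \<le> tail g x"
  using tail_split[OF assms] integral_nonneg[OF good_int_Icc(2)[OF assms(1,2)], of y] good_nn[OF assms(1)]
  by force

lemma tail_shift:
  assumes "good b g" "x \<ge> 0"
  shows "tail g x = (LBINT u:{0..}. g (x + u))" "set_integrable lborel {0..} (\<lambda>u. g (x + u))"
proof -
  have ind: "indicator {x..} (x + u) = (indicator {0..} u :: real)" for u
    by (simp add: indicator_def)
  have "integrable lborel (\<lambda>t. indicator {x..} t *\<^sub>R g t)"
    using good_int(1)[OF assms] by (simp add: set_integrable_def)
  from lborel_integrable_real_affine[OF this, of 1 x]
  show "set_integrable lborel {0..} (\<lambda>u. g (x + u))"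
    by (simp add: set_integrable_def ind)
  show "tail g x = (LBINT u:{0..}. g (x + u))"
    unfolding tail_def set_lebesgue_integral_def
    using lborel_integral_real_affine[of 1 "\<lambda>t. indicator {x..} t *\<^sub>R g t" x]
    by (simp add: ind)
qed


definition ratio_mono :: "real \<Rightarrow> real set \<Rightarrow> (real \<Rightarrow> real) \<Rightarrow> bool" where
  "ratio_mono d S g \<longleftrightarrow> (\<forall>t\<ge>0. \<forall>x\<in>S. \<forall>y\<in>S. x \<le> y \<longrightarrow> d * (g (y+t) / g y) \<le> d * (g (x+t) / g x))"

lemma hazard:
  assumes g: "good b g" and S: "S \<subseteq> {0..}" and Spos: "\<And>z. z \<in> S \<Longrightarrow> g z > 0"
    and d: "d = 1 \<or> d = -1" and rm: "ratio_mono d S g"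
    and xy: "x \<in> S" "y \<in> S" "x \<le> y"
  shows "d * (g x / tail g x) \<le> d * (g y / tail g y)"
proof -
  have x0: "x \<ge> 0" and y0: "y \<ge> 0" using xy S by auto
  have gx: "g x > 0" and gy: "g y > 0" using Spos xy by auto
  have tx: "tail g x > 0" and ty: "tail g y > 0" using tail_pos[OF g] x0 y0 by auto
  have "(LBINT u:{0..}. d * (g (y+u) * (1 / g y))) \<le> (LBINT u:{0..}. d * (g (x+u) * (1 / g x)))"
  proof (rule set_integral_mono)
    show "set_integrable lborel {0..} (\<lambda>u. d * (g (y+u) * (1 / g y)))"
      using tail_shift(2)[OF g y0] by (intro set_integrable_mult_right set_integrable_mult_left) auto
    show "set_integrable lborel {0..} (\<lambda>u. d * (g (x+u) * (1 / g x)))"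
      using tail_shift(2)[OF g x0] by (intro set_integrable_mult_right set_integrable_mult_left) auto
    fix u :: real assume "u \<in> {0..}"
    then have "d * (g (y+u) / g y) \<le> d * (g (x+u) / g x)"
      using rm xy unfolding ratio_mono_def by auto
    then show "d * (g (y+u) * (1 / g y)) \<le> d * (g (x+u) * (1 / g x))" by simp
  qed
  then have "d * (tail g y / g y) \<le> d * (tail g x / g x)"
    using tail_shift(1)[OF g x0] tail_shift(1)[OF g y0] by simp
  with d gx gy tx ty show ?thesis
    by (auto simp: field_simps)
qed


lemma HK_to_lborel:
  fixes f :: "real \<Rightarrow> real"
  assumes "f integrable_on S" "\<And>x. x \<in> S \<Longrightarrow> 0 \<le> f x"
    and "(\<lambda>x. indicator S x *\<^sub>R f x) \<in> borel_measurable borel"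
  shows "set_integrable lborel S f"
proof -
  have "f absolutely_integrable_on S"
    by (rule nonnegative_absolutely_integrable_1) (use assms in auto)
  then show ?thesis
    unfolding set_integrable_def using assms(3)
    by (subst (asm) integrable_completion) auto
qed

lemma exp_si: fixes b c B :: real assumes "b > 0" shows "set_integrable lborel {c..} (\<lambda>x. B * exp (- b * x))"
proof -
  have "set_integrable lborel {c..} (\<lambda>x. exp (- b * x))"
    by (rule HK_to_lborel[OF integrable_on_exp_minus_to_infinity[OF assms]])
       (auto intro!: borel_measurable_continuous_on_indicator continuous_intros)
  then show ?thesis using set_integrable_mult_right[of B lborel "{c..}" "\<lambda>x. exp (- b * x)"] by simp
qed

lemma tail_deriv:
  assumes g: "good b g" and x: "x > 0"
  shows "(tail g has_real_derivative - g x) (at x)"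
proof -
  define a where "a = x / 2"
  have a: "0 < a" "a < x" using x by (auto simp: a_def)
  have c: "continuous_on {a..x+1} g"
    by (rule continuous_on_subset[OF good_cont[OF g]]) (use a in auto)
  have "((\<lambda>y. integral {a..y} g) has_real_derivative g x) (at x within {a..x+1})"
    by (rule integral_has_real_derivative[OF c]) (use a in auto)
  then have "((\<lambda>y. integral {a..y} g) has_real_derivative g x) (at x)"
    using at_within_Icc_at[of a x "x+1"] a by simp
  then have "((\<lambda>y. tail g a - integral {a..y} g) has_real_derivative - g x) (at x)"
    by (auto intro!: derivative_eq_intros)
  then show ?thesis
  proof (rule has_field_derivative_transform_within_open[of _ _ _ "{a<..}"])
    fix y assume "y \<in> {a<..}"
    then show "tail g a - integral {a..y} g = tail g y"
      using tail_split[OF g, of a y] a by auto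
  qed (use a in auto)
qed

lemma tail_cont:
  assumes g: "good b g" and p: "0 \<le> p"
  shows "continuous_on {p..q} (tail g)"
proof -
  have ii: "continuous_on {0..q} (\<lambda>y. integral {0..y} g)"
    by (rule indefinite_integral_continuous_1[OF good_int_Icc(2)[OF g]]) simp
  then have "continuous_on {p..q} (\<lambda>y. tail g 0 - integral {0..y} g)"
    using continuous_on_subset[OF ii, of "{p..q}"] p by (auto intro: continuous_on_diff[OF continuous_on_const])
  then show ?thesis
  proof (rule continuous_on_cong[THEN iffD1, rotated 2])
    fix y assume "y \<in> {p..q}"
    then show "tail g 0 - integral {0..y} g = tail g y"
      using tail_split[OF g, of 0 y] p by auto
  qed simp
qed


lemma tail_good:
  assumes g: "good b g" and b: "b > 0"
  shows "good b (tail g)"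
proof -
  have nn: "\<And>x. 0 \<le> tail g x" by (rule tail_nonneg[OF good_nn[OF g]])
  have pos: "\<forall>x>0. 0 < tail g x" using tail_pos[OF g] by auto
  have cont: "continuous_on {0<..} (tail g)"
    by (rule continuous_at_imp_continuous_on) (auto intro: DERIV_isCont tail_deriv[OF g])
  obtain K where K: "\<And>x. x \<ge> 1 \<Longrightarrow> g x \<le> K * exp (- b * x)" using good_bd[OF g] by auto
  have bd1: "tail g x \<le> (K / b) * exp (- b * x)" if x: "x \<ge> 1" for x
  proof -
    have hi: "((\<lambda>t. K * exp (- b * t)) has_integral K * (exp (- b * x) / b)) {x..}"
      using has_integral_mult_right[OF has_integral_exp_minus_to_infinity[OF b, of x]] .
    have "tail g x = integral {x..} g" using good_int(3)[OF g] x by simp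
    also have "\<dots> \<le> integral {x..} (\<lambda>t. K * exp (- b * t))"
      by (rule integral_le[OF good_int(2)[OF g] has_integral_integrable[OF hi]]) (use x K in auto)
    also have "\<dots> = (K / b) * exp (- b * x)" using integral_unique[OF hi] by simp
    finally show ?thesis .
  qed
  define B where "B = max (tail g 0 * exp b) (K / b)"
  have bd: "tail g x \<le> B * exp (- b * x)" if x: "x \<ge> 0" for x
  proof (cases "x \<le> 1")
    case True
    have "1 \<le> exp (b - b * x)" using True b by (simp add: mult_le_cancel_left1)
    then have e: "1 \<le> exp b * exp (- b * x)" by (simp add: exp_add[symmetric])
    have "tail g x \<le> tail g 0" by (rule tail_mono[OF g]) (use x in auto)
    also have "\<dots> \<le> tail g 0 * (exp b * exp (- b * x))"
      using mult_left_mono[OF e nn[of 0]] by simp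
    also have "\<dots> \<le> B * exp (- b * x)"
      by (simp add: B_def mult.assoc[symmetric])
    finally show ?thesis .
  next
    case False
    then have "tail g x \<le> (K / b) * exp (- b * x)" by (intro bd1) auto
    also have "\<dots> \<le> B * exp (- b * x)" unfolding B_def by (intro mult_right_mono) auto
    finally show ?thesis .
  qed
  define h where "h x = tail g (max x 0)" for x
  have "mono (\<lambda>x. - h x)"
    by (rule monoI) (auto simp: h_def intro!: tail_mono[OF g])
  then have "(\<lambda>x. - h x) \<in> borel_measurable borel" by (rule borel_measurable_mono)
  then have hm: "h \<in> borel_measurable borel"
    using borel_measurable_uminus[of "\<lambda>x. - h x" borel] by simp
  have meas: "set_borel_measurable lborel {0..} (tail g)"
  proof -
    have "(\<lambda>x. indicator {0..} x *\<^sub>R h x) \<in> borel_measurable borel"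
      using hm by measurable
    moreover have "(\<lambda>x. indicator {0..} x *\<^sub>R h x) = (\<lambda>x. indicator {0..} x *\<^sub>R tail g x)"
      by (auto simp: h_def indicator_def)
    ultimately show ?thesis by (simp add: set_borel_measurable_def)
  qed
  have si: "set_integrable lborel {0..} (tail g)"
  proof (rule set_integrable_bound[OF exp_si[OF b, of 0 B] meas])
    show "AE x in lborel. x \<in> {0..} \<longrightarrow> norm (tail g x) \<le> norm (B * exp (- b * x))"
      using bd nn by (auto intro!: AE_I2 order_trans[OF _ abs_ge_self])
  qed
  show ?thesis unfolding good_def
    using nn pos cont si bd1 by blast
qed


lemma ln_ratio_le:
  fixes a b c e :: real
  assumes "0 < a" "0 < b" "0 < c" "0 < e" "ln a - ln b \<le> ln c - ln e"
  shows "a / b \<le> c / e"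
proof -
  have "ln (a / b) \<le> ln (c / e)" using assms by (simp add: ln_div)
  then show ?thesis using assms by simp
qed

lemma tail_ratio:
  assumes g: "good b g" and d: "d = 1 \<or> d = -1"
    and H: "\<And>x y. 0 < x \<Longrightarrow> x \<le> y \<Longrightarrow> d * (g x / tail g x) \<le> d * (g y / tail g y)"
  shows "ratio_mono d {0..} (tail g)"
  unfolding ratio_mono_def
proof (intro allI impI ballI)
  fix t x y :: real assume t: "t \<ge> 0" and x: "x \<in> {0..}" and y: "y \<in> {0..}" and xy: "x \<le> y"
  define \<phi> where "\<phi> z = d * (ln (tail g (z+t)) - ln (tail g z))" for z
  have "\<phi> y \<le> \<phi> x"
  proof (rule DERIV_nonpos_imp_decreasing_open[OF xy])
    fix z assume z: "x < z" "z < y"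
    then have z0: "z > 0" using x by auto
    have tp1: "tail g z > 0" and tp2: "tail g (z+t) > 0" using tail_pos[OF g] z0 t by auto
    have d2: "(tail g has_real_derivative - g z) (at z)" by (rule tail_deriv[OF g z0])
    have "(tail g has_real_derivative - g (z+t)) (at (z+t))" by (rule tail_deriv[OF g]) (use z0 t in auto)
    then have d1: "((\<lambda>z. tail g (z+t)) has_real_derivative - g (z+t)) (at z)"
      by (simp add: DERIV_shift)
    have l1: "((\<lambda>z. ln (tail g (z+t))) has_real_derivative (- g (z+t)) / tail g (z+t)) (at z)"
      using DERIV_chain2[OF DERIV_ln_divide[OF tp2] d1] by simp
    have l2: "((\<lambda>z. ln (tail g z)) has_real_derivative (- g z) / tail g z) (at z)"
      using DERIV_chain2[OF DERIV_ln_divide[OF tp1] d2] by simp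
    have "(\<phi> has_real_derivative d * ((- g (z+t)) / tail g (z+t) - (- g z) / tail g z)) (at z)"
      unfolding \<phi>_def by (intro DERIV_cmult DERIV_diff l1 l2)
    moreover have "d * ((- g (z+t)) / tail g (z+t) - (- g z) / tail g z) \<le> 0"
      using H[OF z0, of "z+t"] t by (simp add: algebra_simps)
    ultimately show "\<exists>D. (\<phi> has_real_derivative D) (at z) \<and> D \<le> 0" by blast
  next
    have x0: "x \<ge> 0" using x by auto
    have c1: "continuous_on {x..y} (tail g)" by (rule tail_cont[OF g x0])
    have c0: "continuous_on {x+t..y+t} (tail g)" by (rule tail_cont[OF g]) (use x0 t in auto)
    have c2: "continuous_on {x..y} (\<lambda>z. tail g (z+t))"
      by (rule continuous_on_compose2[OF c0]) (auto intro: continuous_intros)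
    have pos: "\<And>z. z \<in> {x..y} \<Longrightarrow> tail g z \<noteq> 0 \<and> tail g (z+t) \<noteq> 0"
      using tail_pos[OF g] x0 t by (metis atLeastAtMost_iff add_nonneg_nonneg less_irrefl order_trans)
    show "continuous_on {x..y} \<phi>"
      unfolding \<phi>_def
      by (intro continuous_on_mult continuous_on_const continuous_on_diff continuous_on_ln c1 c2)
         (use pos in auto)
  qed
  moreover have "tail g x > 0" "tail g y > 0" "tail g (x+t) > 0" "tail g (y+t) > 0"
    using tail_pos[OF g] x y t by auto
  ultimately have F: "\<phi> y \<le> \<phi> x" "tail g x > 0" "tail g y > 0" "tail g (x+t) > 0" "tail g (y+t) > 0"
    by auto
  show "d * (tail g (y + t) / tail g y) \<le> d * (tail g (x + t) / tail g x)"
  proof (cases "d = 1")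
    case True
    then show ?thesis using F by (auto simp: \<phi>_def intro: ln_ratio_le)
  next
    case False
    then have d1: "d = -1" using d by auto
    then have "ln (tail g (x+t)) - ln (tail g x) \<le> ln (tail g (y+t)) - ln (tail g y)"
      using F(1) by (simp add: \<phi>_def)
    then show ?thesis using d1 F by (auto intro: ln_ratio_le)
  qed
qed


lemma good_scale:
  assumes g: "good b g" and c: "c > 0"
  shows "good b (\<lambda>x. g x / c)"
proof -
  have nn: "\<forall>x. 0 \<le> g x / c" using good_nn[OF g] c by auto
  have si: "set_integrable lborel {0..} (\<lambda>x. g x / c)"
    using set_integrable_mult_left[of "1/c" lborel "{0..}" g] good_si[OF g] by simp
  have pos: "\<forall>x>0. 0 < g x / c" using good_pos[OF g] c by auto
  have cont: "continuous_on {0<..} (\<lambda>x. g x / c)"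
    using good_cont[OF g] c by (auto intro!: continuous_on_divide continuous_on_const)
  obtain K where K: "\<And>x. x \<ge> 1 \<Longrightarrow> g x \<le> K * exp (- b * x)" using good_bd[OF g] by auto
  have "\<forall>x\<ge>1. g x / c \<le> (K / c) * exp (- b * x)"
    using K c by (auto simp: divide_right_mono)
  then show ?thesis unfolding good_def using nn si pos cont by blast
qed

lemma ratio_scale:
  assumes "ratio_mono d S g" "c > 0"
  shows "ratio_mono d S (\<lambda>x. g x / c)"
  using assms unfolding ratio_mono_def by simp

lemma step:
  assumes g: "good b g" and b: "b > 0" and d: "d = 1 \<or> d = -1"
    and H: "\<And>x y. 0 < x \<Longrightarrow> x \<le> y \<Longrightarrow> d * (g x / tail g x) \<le> d * (g y / tail g y)"
  shows "good b (\<lambda>x. tail g x / tail g 0) \<and> ratio_mono d {0..} (\<lambda>x. tail g x / tail g 0)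
     \<and> (\<forall>x\<ge>0. tail g x / tail g 0 > 0)"
proof -
  have c: "tail g 0 > 0" using tail_pos[OF g] by simp
  show ?thesis
    using good_scale[OF tail_good[OF g b] c] ratio_scale[OF tail_ratio[OF g d H] c]
      tail_pos[OF g] c by auto
qed

lemma Tbar_Suc: "Tbar f (Suc s) = (\<lambda>x. tail (Tbar f s) x / tail (Tbar f s) 0)"
  by (simp add: tail_def)

lemma ifr_tail: "iter_failure_rate f s x = Tbar f (s - 1) x / tail (Tbar f (s - 1)) x"
  by (simp add: iter_failure_rate_def tail_def)


lemma gd_ratio:
  fixes \<alpha> \<theta> z t :: real
  assumes "\<theta> > 0" "\<alpha> > 0" "z > 0" "t \<ge> 0"
  shows "gamma_density \<alpha> \<theta> (z+t) / gamma_density \<alpha> \<theta> z = ((z+t)/z) powr (\<alpha>-1) * exp (- t / \<theta>)"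
proof -
  have C: "\<theta> powr \<alpha> * Gamma \<alpha> > 0" using assms by auto
  have e: "exp ((- t - z) / \<theta>) = exp (- (t / \<theta>)) * exp (- (z / \<theta>))"
    using assms by (subst exp_add[symmetric]) (simp add: field_simps)
  have G: "Gamma \<alpha> \<noteq> 0" using Gamma_real_pos[of \<alpha>] assms by linarith
  have p: "z powr (\<alpha>-1) > 0" using assms by auto
  show ?thesis using assms C p G
    unfolding gamma_density_def powr_divide by (simp add: e field_simps)
qed

lemma gd_ratio_mono:
  fixes \<alpha> \<theta> :: real
  assumes "\<theta> > 0" "\<alpha> > 0"
  shows "ratio_mono (if 1 \<le> \<alpha> then 1 else -1) {0<..} (gamma_density \<alpha> \<theta>)"
  unfolding ratio_mono_def
proof (intro allI impI ballI)
  fix t x y :: real assume t: "t \<ge> 0" and x: "x \<in> {0<..}" and y: "y \<in> {0<..}" and xy: "x \<le> y"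
  have x0: "x > 0" and y0: "y > 0" using x y by auto
  have q: "(y+t)/y \<le> (x+t)/x"
    using x0 y0 xy t by (simp add: add_divide_distrib divide_left_mono)
  have q1: "1 \<le> (y+t)/y" using y0 t by simp
  have ex: "exp (- t / \<theta>) > 0" by simp
  show "(if 1 \<le> \<alpha> then 1 else -1) * (gamma_density \<alpha> \<theta> (y + t) / gamma_density \<alpha> \<theta> y)
        \<le> (if 1 \<le> \<alpha> then 1 else -1) * (gamma_density \<alpha> \<theta> (x + t) / gamma_density \<alpha> \<theta> x)"
  proof (cases "1 \<le> \<alpha>")
    case True
    have "((y+t)/y) powr (\<alpha>-1) \<le> ((x+t)/x) powr (\<alpha>-1)"
      by (rule powr_mono2) (use True q q1 in auto)
    then show ?thesis using True gd_ratio[OF assms x0 t] gd_ratio[OF assms y0 t]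
      by (simp add: mult_right_mono)
  next
    case False
    have "((x+t)/x) powr (\<alpha>-1) \<le> ((y+t)/y) powr (\<alpha>-1)"
      by (rule powr_mono2') (use False q q1 in auto)
    then show ?thesis using False gd_ratio[OF assms x0 t] gd_ratio[OF assms y0 t]
      by (simp add: mult_right_mono)
  qed
qed


lemma gd_bound:
  fixes \<alpha> \<theta> :: real
  assumes th: "\<theta> > 0"
  shows "\<exists>M. \<forall>x\<ge>1. x powr (\<alpha> - 1) * exp (- x / (2*\<theta>)) \<le> M"
proof -
  have "((\<lambda>x::real. x powr (\<alpha> - 1) * exp (-x/(2*\<theta>))) \<longlongrightarrow> 0) at_top"
    using th by real_asymp
  then have "eventually (\<lambda>x. x powr (\<alpha> - 1) * exp (- x / (2*\<theta>)) < 1) at_top"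
    by (rule order_tendstoD) simp
  then obtain N where N: "\<And>x. x \<ge> N \<Longrightarrow> x powr (\<alpha> - 1) * exp (- x / (2*\<theta>)) < 1"
    by (auto simp: eventually_at_top_linorder)
  define M where "M = max 1 (max 1 N powr (\<alpha> - 1))"
  have "x powr (\<alpha> - 1) * exp (- x / (2*\<theta>)) \<le> M" if x: "x \<ge> 1" for x
  proof (cases "x \<ge> N")
    case True then show ?thesis using N[of x] by (simp add: M_def)
  next
    case False
    have e: "exp (- x / (2*\<theta>)) \<le> 1" using x th by simp
    have p: "x powr (\<alpha> - 1) \<le> M"
    proof (cases "\<alpha> \<ge> 1")
      case True
      have "x powr (\<alpha> - 1) \<le> max 1 N powr (\<alpha> - 1)"
        by (rule powr_mono2) (use True False x in auto)
      then show ?thesis by (simp add: M_def)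
    next
      case False
      have "x powr (\<alpha> - 1) \<le> 1 powr (\<alpha> - 1)"
        by (rule powr_mono2') (use False x in auto)
      then show ?thesis by (simp add: M_def)
    qed
    have "x powr (\<alpha> - 1) * exp (- x / (2*\<theta>)) \<le> x powr (\<alpha> - 1) * 1"
      by (rule mult_left_mono[OF e]) simp
    then show ?thesis using p by simp
  qed
  then show ?thesis by blast
qed

lemma gd_good:
  fixes \<alpha> \<theta> :: real
  assumes th: "\<theta> > 0" and al: "\<alpha> > 0"
  shows "good (1 / (2*\<theta>)) (gamma_density \<alpha> \<theta>)"
proof -
  define C where "C = \<theta> powr \<alpha> * Gamma \<alpha>"
  have C: "C > 0" using th al by (auto simp: C_def)
  have f: "gamma_density \<alpha> \<theta> x = (if x > 0 then x powr (\<alpha> - 1) * exp (- x / \<theta>) / C else 0)" for x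
    by (simp add: gamma_density_def C_def)
  have nn: "\<forall>x. 0 \<le> gamma_density \<alpha> \<theta> x" using C by (auto simp: f)
  have pos: "\<forall>x>0. 0 < gamma_density \<alpha> \<theta> x" using C by (auto simp: f)
  have cont: "continuous_on {0<..} (gamma_density \<alpha> \<theta>)"
  proof -
    have "continuous_on {0<..} (\<lambda>x::real. x powr (\<alpha> - 1) * exp (- x / \<theta>) / C)"
      using C th by (auto intro!: continuous_intros)
    then show ?thesis by (rule continuous_on_cong[THEN iffD1, rotated 2]) (auto simp: f)
  qed
  obtain M where M: "\<And>x. x \<ge> 1 \<Longrightarrow> x powr (\<alpha> - 1) * exp (- x / (2*\<theta>)) \<le> M"
    using gd_bound[OF th, of \<alpha>] by auto
  have bd: "\<forall>x\<ge>1. gamma_density \<alpha> \<theta> x \<le> (M / C) * exp (- (1 / (2*\<theta>)) * x)"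
  proof (intro allI impI)
    fix x :: real assume x: "x \<ge> 1"
    have e: "exp (- x / \<theta>) = exp (- x / (2*\<theta>)) * exp (- x / (2*\<theta>))"
      using th by (subst exp_add[symmetric]) (simp add: field_simps)
    have "x powr (\<alpha> - 1) * exp (- x / \<theta>) \<le> M * exp (- x / (2*\<theta>))"
    proof -
      have m: "x powr (\<alpha> - 1) * exp (- x / (2*\<theta>)) * exp (- x / (2*\<theta>)) \<le> M * exp (- x / (2*\<theta>))"
        by (rule mult_right_mono[OF M[OF x]]) simp
      then show ?thesis unfolding e by (simp only: mult.assoc)
    qed
    then show "gamma_density \<alpha> \<theta> x \<le> (M / C) * exp (- (1 / (2*\<theta>)) * x)"
      using x C by (simp add: f divide_right_mono)
  qed
  define h where "h t = indicator {0..} t * (t powr (\<alpha> - 1) / exp t)" for t :: real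
  have hi: "integrable lborel h"
  proof -
    have "set_integrable lborel {0..} (\<lambda>t::real. t powr (\<alpha> - 1) / exp t)"
      by (rule HK_to_lborel[OF has_integral_integrable[OF Gamma_integral_real[OF al]]]) auto
    then show ?thesis by (simp add: set_integrable_def h_def[abs_def])
  qed
  have hi2: "integrable lborel (\<lambda>x. (\<theta> powr (\<alpha> - 1) / C) * h (0 + (1/\<theta>) * x))"
    using lborel_integrable_real_affine[OF hi, of "1/\<theta>" 0] th by simp
  have eq: "(\<theta> powr (\<alpha> - 1) / C) * h (0 + (1/\<theta>) * x) = indicator {0..} x *\<^sub>R gamma_density \<alpha> \<theta> x" for x
  proof (cases "x > 0")
    case True
    then show ?thesis using th C
      by (simp add: h_def f indicator_def powr_divide exp_minus field_simps)
  next
    case False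
    then show ?thesis using th by (cases "x = 0") (auto simp: h_def f indicator_def zero_le_divide_iff)
  qed
  have si: "set_integrable lborel {0..} (gamma_density \<alpha> \<theta>)"
    using hi2 unfolding set_integrable_def eq .
  show ?thesis unfolding good_def using nn si pos cont bd by blast
qed


lemma main_ind:
  fixes \<alpha> \<theta> :: real
  assumes th: "\<theta> > 0" and al: "\<alpha> > 0" and s: "s \<ge> 1"
  defines "d \<equiv> (if 1 \<le> \<alpha> then 1 else -1 :: real)"
  shows "good (1 / (2*\<theta>)) (Tbar (gamma_density \<alpha> \<theta>) s) \<and> ratio_mono d {0..} (Tbar (gamma_density \<alpha> \<theta>) s)
     \<and> (\<forall>x\<ge>0. Tbar (gamma_density \<alpha> \<theta>) s x > 0)"
  using s
proof (induction s)
  case 0 then show ?case by simp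
next
  case (Suc s)
  let ?f = "gamma_density \<alpha> \<theta>"
  have b: "1 / (2*\<theta>) > 0" using th by simp
  have d: "d = 1 \<or> d = -1" by (simp add: d_def)
  show ?case
  proof (cases "s = 0")
    case True
    have g: "good (1 / (2*\<theta>)) ?f" by (rule gd_good[OF th al])
    have rm: "ratio_mono d {0<..} ?f" unfolding d_def by (rule gd_ratio_mono[OF th al])
    have H: "d * (?f x / tail ?f x) \<le> d * (?f y / tail ?f y)" if "0 < x" "x \<le> y" for x y
      by (rule hazard[OF g _ _ d rm]) (use that good_pos[OF g] in auto)
    have gf: "Tbar ?f s = ?f" using True by simp
    show ?thesis unfolding Tbar_Suc gf by (rule step[OF g b d H])
  next
    case False
    then have IH: "good (1 / (2*\<theta>)) (Tbar ?f s)" "ratio_mono d {0..} (Tbar ?f s)"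
      "\<And>x. x \<ge> 0 \<Longrightarrow> Tbar ?f s x > 0"
      using Suc by auto
    have H: "d * (Tbar ?f s x / tail (Tbar ?f s) x) \<le> d * (Tbar ?f s y / tail (Tbar ?f s) y)"
      if "0 < x" "x \<le> y" for x y
      by (rule hazard[OF IH(1) _ _ d IH(2)]) (use that IH(3) in auto)
    show ?thesis unfolding Tbar_Suc by (rule step[OF IH(1) b d H])
  qed
qed

theorem theorem2:
  fixes \<alpha> \<theta> :: real and s :: nat
  assumes "\<alpha> > 0" and "\<theta> > 0" and "s \<ge> 1"
  shows "(\<alpha> \<ge> 1 \<longrightarrow> s_IFR (gamma_density \<alpha> \<theta>) s)
       \<and> (\<alpha> < 1 \<longrightarrow> s_DFR (gamma_density \<alpha> \<theta>) s)"
proof -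
  let ?f = "gamma_density \<alpha> \<theta>"
  define d where "d = (if 1 \<le> \<alpha> then 1 else -1 :: real)"
  have d: "d = 1 \<or> d = -1" by (simp add: d_def)
  let ?g = "Tbar ?f (s - 1)"
  have key: "d * iter_failure_rate ?f s x \<le> d * iter_failure_rate ?f s y"
    if "0 < x" "x \<le> y" for x y
  proof (cases "s = 1")
    case True
    have g: "good (1 / (2*\<theta>)) ?f" by (rule gd_good[OF assms(2,1)])
    have rm: "ratio_mono d {0<..} ?f" unfolding d_def by (rule gd_ratio_mono[OF assms(2,1)])
    have gf: "?g = ?f" using True by simp
    show ?thesis unfolding ifr_tail gf
      by (rule hazard[OF g _ _ d rm]) (use that good_pos[OF g] in auto)
  next
    case False
    then have "s - 1 \<ge> 1" using assms(3) by auto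
    from main_ind[OF assms(2,1) this] have IH: "good (1 / (2*\<theta>)) ?g" "ratio_mono d {0..} ?g"
      "\<And>x. x \<ge> 0 \<Longrightarrow> ?g x > 0"
      unfolding d_def by auto
    show ?thesis unfolding ifr_tail
      by (rule hazard[OF IH(1) _ _ d IH(2)]) (use that IH(3) in auto)
  qed
  have key0: "iter_failure_rate ?f s 0 \<le> iter_failure_rate ?f s y"
    if "0 < y" "1 \<le> \<alpha>" for y
  proof (cases "s = 1")
    case True
    have "iter_failure_rate ?f s 0 = 0" unfolding ifr_tail using True by (simp add: gamma_density_def)
    moreover have "iter_failure_rate ?f s y \<ge> 0"
    proof -
      have gf: "?g = ?f" using True by simp
      have nn: "\<And>x. 0 \<le> ?f x" using good_nn[OF gd_good[OF assms(2,1)]] .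
      show ?thesis unfolding ifr_tail gf using tail_nonneg[of ?f y, OF nn] nn[of y] by simp
    qed
    ultimately show ?thesis by simp
  next
    case False
    then have "s - 1 \<ge> 1" using assms(3) by auto
    from main_ind[OF assms(2,1) this] have IH: "good (1 / (2*\<theta>)) ?g" "ratio_mono d {0..} ?g"
      "\<And>x. x \<ge> 0 \<Longrightarrow> ?g x > 0"
      unfolding d_def by auto
    have "d * iter_failure_rate ?f s 0 \<le> d * iter_failure_rate ?f s y"
      unfolding ifr_tail
      by (rule hazard[OF IH(1) _ _ d IH(2)]) (use that IH(3) in auto)
    then show ?thesis using that by (simp add: d_def)
  qed
  show ?thesis
  proof (intro conjI impI)
    assume a: "1 \<le> \<alpha>"
    show "s_IFR ?f s" unfolding s_IFR_def
    proof (rule mono_onI)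
      fix x y :: real assume "x \<in> {0..}" "y \<in> {0..}" "x \<le> y"
      then consider "x = y" | "x = 0" "0 < y" | "0 < x" "x \<le> y" by fastforce
      then show "iter_failure_rate ?f s x \<le> iter_failure_rate ?f s y"
      proof cases
        case 2 then show ?thesis using key0[OF _ a] by simp
      next
        case 3 then show ?thesis using key[OF 3] a by (simp add: d_def)
      qed simp
    qed
  next
    assume a: "\<alpha> < 1"
    show "s_DFR ?f s" unfolding s_DFR_def
    proof (rule monotone_onI)
      fix x y :: real assume "x \<in> {0<..}" "y \<in> {0<..}" "x \<le> y"
      then show "iter_failure_rate ?f s y \<le> iter_failure_rate ?f s x"
        using key[of x y] a by (simp add: d_def)
    qed
  qed
qed

end
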